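(* Suppose $\psi_1(u)\le\psi_1(u')\exp(C_3|u-u'|)$ for all $u,u'\in\mathbb R$ (with $C_3\ge0$) and $\max_{0\le j\le q}|g_j(\bm X)|\le C_4$ a.s. Then for any $\alpha,\tilde\alpha\in\mathbb R^{q+1}$, with $b=\alpha-\tilde\alpha$ and $C_{40}=C_3C_4$, $$D^\dagger_{\rm WL}(\alpha^\top\bm G,\tilde\alpha^\top\bm G;\bar\gamma)\ge\{b^\top\tilde{\bm\Sigma}_\alpha(\tilde\alpha)b\}\frac{1-\exp(-C_{40}\|b\|_1)}{C_{40}\|b\|_1},$$ where $\tilde{\bm\Sigma}_\alpha(\tilde\alpha)=\tilde{\mathbb E}[Rw(\bm X;\bar\gamma)\psi_1(\tilde\alpha^\top\bm G)\bm G\bm G^\top]$, and $\{1-\exp(-c)\}/c$ is interpreted as $1$ when $c=0$.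
   Context: $\tilde{\mathbb E}$ is the sample mean over observations $(\bm X_i,Y_i,R_i)$ with $R_i\in\{0,1\}$. $\bm F$ and $\bm G=(g_0,\dots,g_q)^\top$ are vectors of functions of $\bm X$. $w(\bm X;\gamma)=\exp(-\gamma^\top\bm F)$, and $\bar\gamma$ is a fixed vector. $\psi$ is an increasing differentiable inverse link with derivative $\psi_1$. $D^\dagger_{\rm WL}(h,h';\gamma)=\tilde{\mathbb E}[Rw(\bm X;\gamma)\{\psi(h)-\psi(h')\}(h-h')]$. *)

theory Defs
  imports "HOL-Analysis.Analysis"
begin

definition smean :: "nat \<Rightarrow> (nat \<Rightarrow> real) \<Rightarrow> real" where
  "smean n f = (\<Sum>i<n. f i) / real n"

definition wgt :: "('x \<Rightarrow> real^'p) \<Rightarrow> 'x \<Rightarrow> real^'p \<Rightarrow> real" where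
  "wgt F x \<gamma> = exp (- (\<gamma> \<bullet> F x))"

definition D_WL :: "nat \<Rightarrow> (nat \<Rightarrow> 'x) \<Rightarrow> (nat \<Rightarrow> real) \<Rightarrow> ('x \<Rightarrow> real^'p)
    \<Rightarrow> (real \<Rightarrow> real) \<Rightarrow> ('x \<Rightarrow> real) \<Rightarrow> ('x \<Rightarrow> real) \<Rightarrow> real^'p \<Rightarrow> real" where
  "D_WL n X R F \<psi> h h' \<gamma> =
     smean n (\<lambda>i. R i * wgt F (X i) \<gamma> * (\<psi> (h (X i)) - \<psi> (h' (X i))) * (h (X i) - h' (X i)))"

definition Sigma_tilde :: "nat \<Rightarrow> (nat \<Rightarrow> 'x) \<Rightarrow> (nat \<Rightarrow> real) \<Rightarrow> ('x \<Rightarrow> real^'p)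
    \<Rightarrow> real^'p \<Rightarrow> (real \<Rightarrow> real) \<Rightarrow> ('x \<Rightarrow> real^'q) \<Rightarrow> real^'q \<Rightarrow> real^'q^'q" where
  "Sigma_tilde n X R F \<gamma> \<psi>1 G a =
     (\<chi> j k. smean n (\<lambda>i. R i * wgt F (X i) \<gamma> * \<psi>1 (a \<bullet> G (X i)) * (G (X i) $ j) * (G (X i) $ k)))"

definition l1norm :: "real^'q \<Rightarrow> real" where
  "l1norm b = (\<Sum>j\<in>UNIV. \<bar>b $ j\<bar>)"

definition expfrac :: "real \<Rightarrow> real" where
  "expfrac c = (if c = 0 then 1 else (1 - exp (- c)) / c)"

end

theory Submission
  imports Defs
begin


lemma shiftD:
  assumes "\<forall>u. (\<psi> has_real_derivative \<psi>1 u) (at u)"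
  shows "((\<lambda>z. \<psi> (v + z)) has_real_derivative \<psi>1 (v + x)) (at x)"
proof -
  have "((\<lambda>z. v + z) has_real_derivative 1) (at x)" by (auto intro!: derivative_eq_intros)
  from DERIV_chain2[OF assms[rule_format, of "v+x"] this] show ?thesis by simp
qed

lemma lemA:
  fixes \<psi> \<psi>1 :: "real \<Rightarrow> real" and C3 v d :: real
  assumes psi_deriv: "\<forall>u. (\<psi> has_real_derivative \<psi>1 u) (at u)"
    and C3: "C3 \<ge> 0"
    and b: "\<forall>u u'. \<psi>1 u \<le> \<psi>1 u' * exp (C3 * \<bar>u - u'\<bar>)"
    and d: "d \<ge> 0"
  shows "\<psi> (v + d) - \<psi> v \<ge> \<psi>1 v * (d * expfrac (C3 * d))"
proof (cases "d = 0")
  case True then show ?thesis by simp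
next
  case dne: False
  show ?thesis
  proof (cases "C3 = 0")
    case True
    let ?h = "\<lambda>s. \<psi> (v + s) - \<psi>1 v * s"
    have "?h 0 \<le> ?h d"
    proof (rule deriv_nonneg_imp_mono[where g="?h" and g' = "\<lambda>s. \<psi>1 (v+s) - \<psi>1 v"])
      fix x assume "x \<in> {0..d}" show "(?h has_real_derivative \<psi>1 (v+x) - \<psi>1 v) (at x)"
        using shiftD[OF psi_deriv] by (auto intro!: derivative_eq_intros)
      show "0 \<le> \<psi>1 (v+x) - \<psi>1 v" using b[rule_format, of v "v+x"] True by simp
    qed (use d in auto)
    then show ?thesis using True by (simp add: expfrac_def algebra_simps)
  next
    case False
    hence C3p: "C3 > 0" using C3 by simp
    let ?h = "\<lambda>s. \<psi> (v + s) - \<psi>1 v * ((1 - exp (- C3 * s)) / C3)"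
    have "?h 0 \<le> ?h d"
    proof (rule deriv_nonneg_imp_mono[where g="?h" and g' = "\<lambda>s. \<psi>1 (v+s) - \<psi>1 v * exp (- C3 * s)"])
      fix x assume x: "x \<in> {0..d}" show "(?h has_real_derivative \<psi>1 (v+x) - \<psi>1 v * exp (- C3 * x)) (at x)"
        using shiftD[OF psi_deriv] C3p by (auto intro!: derivative_eq_intros)
      from x have x: "x \<ge> 0" by simp
      have "\<psi>1 v \<le> \<psi>1 (v+x) * exp (C3 * x)" using b[rule_format, of v "v+x"] x by simp
      hence "\<psi>1 v * exp (- C3 * x) \<le> \<psi>1 (v+x) * exp (C3 * x) * exp (- C3 * x)"
        by (simp add: mult_right_mono)
      also have "\<dots> = \<psi>1 (v+x)" by (simp add: mult.assoc flip: exp_add)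
      finally show "0 \<le> \<psi>1 (v+x) - \<psi>1 v * exp (- C3 * x)" by simp
    qed (use d in auto)
    moreover have "d * expfrac (C3*d) = (1 - exp (- C3 * d))/C3" using C3p dne by (simp add: expfrac_def field_simps)
    ultimately show ?thesis by simp
  qed
qed

lemma lemB:
  fixes \<psi> \<psi>1 :: "real \<Rightarrow> real" and C3 v d :: real
  assumes psi_deriv: "\<forall>u. (\<psi> has_real_derivative \<psi>1 u) (at u)"
    and C3: "C3 \<ge> 0"
    and b: "\<forall>u u'. \<psi>1 u \<le> \<psi>1 u' * exp (C3 * \<bar>u - u'\<bar>)"
    and d: "d \<le> 0"
  shows "\<psi> v - \<psi> (v + d) \<ge> \<psi>1 v * ((- d) * expfrac (C3 * (- d)))"
proof (cases "d = 0")
  case True then show ?thesis by simp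
next
  case dne: False
  show ?thesis
  proof (cases "C3 = 0")
    case True
    let ?h = "\<lambda>s. \<psi> (v + s) - \<psi>1 v * s"
    have "?h d \<le> ?h 0"
    proof (rule deriv_nonneg_imp_mono[where g="?h" and g' = "\<lambda>s. \<psi>1 (v+s) - \<psi>1 v"])
      fix x assume "x \<in> {d..0}" show "(?h has_real_derivative \<psi>1 (v+x) - \<psi>1 v) (at x)"
        using shiftD[OF psi_deriv] by (auto intro!: derivative_eq_intros)
      show "0 \<le> \<psi>1 (v+x) - \<psi>1 v" using b[rule_format, of v "v+x"] True by simp
    qed (use d in auto)
    then show ?thesis using True by (simp add: expfrac_def algebra_simps)
  next
    case False
    hence C3p: "C3 > 0" using C3 by simp
    let ?h = "\<lambda>s. \<psi> (v + s) - \<psi>1 v * ((exp (C3 * s) - 1) / C3)"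
    have "?h d \<le> ?h 0"
    proof (rule deriv_nonneg_imp_mono[where g="?h" and g' = "\<lambda>s. \<psi>1 (v+s) - \<psi>1 v * exp (C3 * s)"])
      fix x assume x: "x \<in> {d..0}" show "(?h has_real_derivative \<psi>1 (v+x) - \<psi>1 v * exp (C3 * x)) (at x)"
        using shiftD[OF psi_deriv] C3p by (auto intro!: derivative_eq_intros)
      from x have x: "x \<le> 0" by simp
      have "\<psi>1 v \<le> \<psi>1 (v+x) * exp (- C3 * x)" using b[rule_format, of v "v+x"] x by simp
      hence "\<psi>1 v * exp (C3 * x) \<le> \<psi>1 (v+x) * exp (- C3 * x) * exp (C3 * x)"
        by (simp add: mult_right_mono)
      also have "\<dots> = \<psi>1 (v+x)" by (simp add: mult.assoc flip: exp_add)
      finally show "0 \<le> \<psi>1 (v+x) - \<psi>1 v * exp (C3 * x)" by simp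
    qed (use d in auto)
    moreover have "(-d) * expfrac (C3*(-d)) = (1 - exp (C3 * d))/C3" using C3p dne by (simp add: expfrac_def field_simps)
    moreover have "\<psi>1 v * ((1 - exp (C3 * d))/C3) = - (\<psi>1 v * ((exp (C3 * d) - 1)/C3))"
      using C3p by (simp add: field_simps)
    ultimately show ?thesis by simp
  qed
qed

lemma expfrac_pos: "c \<ge> 0 \<Longrightarrow> expfrac c \<ge> 0"
  by (auto simp: expfrac_def)

lemma expfrac_anti: assumes "0 \<le> a" "a \<le> b" shows "expfrac b \<le> expfrac a"
proof (cases "a = 0")
  case True
  have "1 - exp (- b) \<le> b" using exp_ge_add_one_self[of "-b"] by simp
  then show ?thesis using True assms by (auto simp: expfrac_def)
next
  case False
  hence ap: "a > 0" using assms by simp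
  let ?f = "\<lambda>c. (1 - exp (- c)) / c"
  have "?f b \<le> ?f a"
  proof (rule deriv_nonpos_imp_antimono[where g="\<lambda>c. (1 - exp (- c)) / c" and g' = "\<lambda>c. (exp (-c) * (c + 1) - 1) / c^2"])
    fix x assume x: "x \<in> {a..b}"
    hence xp: "x > 0" using ap by simp
    show "(?f has_real_derivative (exp (-x) * (x + 1) - 1) / x^2) (at x)"
      using xp by (auto intro!: derivative_eq_intros simp: field_simps power2_eq_square)
    have "exp x \<ge> 1 + x" by (rule exp_ge_add_one_self)
    hence "exp (-x) * (x + 1) \<le> exp (-x) * exp x" by (simp add: mult_left_mono add.commute)
    hence "exp (-x) * (x + 1) \<le> 1" by (simp flip: exp_add)
    thus "(exp (-x) * (x + 1) - 1) / x^2 \<le> 0" by (simp add: divide_nonpos_nonneg)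
  qed (use assms in auto)
  then show ?thesis using ap assms by (simp add: expfrac_def)
qed


lemma quadform:
  fixes b :: "real^'q" and G :: "'x \<Rightarrow> real^'q"
  shows "b \<bullet> (Sigma_tilde n X R F \<gamma> \<psi>1 G a *v b)
    = smean n (\<lambda>i. R i * wgt F (X i) \<gamma> * \<psi>1 (a \<bullet> G (X i)) * (b \<bullet> G (X i))^2)"
proof -
  define c where "c i = R i * wgt F (X i) \<gamma> * \<psi>1 (a \<bullet> G (X i))" for i
  have "b \<bullet> (Sigma_tilde n X R F \<gamma> \<psi>1 G a *v b)
     = (\<Sum>j\<in>UNIV. b$j * (\<Sum>k\<in>UNIV. ((\<Sum>i<n. c i * G (X i) $ j * G (X i) $ k) / real n) * b$k))"
    unfolding Sigma_tilde_def smean_def c_def[symmetric]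
    by (simp add: inner_vec_def matrix_vector_mult_def)
  also have "\<dots> = (\<Sum>i<n. \<Sum>j\<in>UNIV. \<Sum>k\<in>UNIV. c i * (b$j * G (X i) $ j) * (b$k * G (X i) $ k)) / real n"
    by (simp add: sum_divide_distrib sum_distrib_left sum_distrib_right sum.swap[of _ "{..<n}"] algebra_simps)
  also have "\<dots> = smean n (\<lambda>i. c i * (b \<bullet> G (X i))^2)"
  proof -
    have "\<And>i. (\<Sum>j\<in>UNIV. \<Sum>k\<in>UNIV. c i * (b$j * G (X i) $ j) * (b$k * G (X i) $ k)) = c i * (b \<bullet> G (X i))^2"
    proof -
      fix i
      let ?y = "\<lambda>j. b$j * G (X i) $ j"
      have "c i * (b \<bullet> G (X i))^2 = c i * ((\<Sum>j\<in>UNIV. ?y j) * (\<Sum>k\<in>UNIV. ?y k))"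
        by (simp add: inner_vec_def power2_eq_square)
      also have "\<dots> = c i * (\<Sum>j\<in>UNIV. \<Sum>k\<in>UNIV. ?y j * ?y k)" by (simp only: sum_product)
      also have "\<dots> = (\<Sum>j\<in>UNIV. \<Sum>k\<in>UNIV. c i * ?y j * ?y k)" by (simp add: sum_distrib_left mult.assoc)
      finally show "(\<Sum>j\<in>UNIV. \<Sum>k\<in>UNIV. c i * (b$j * G (X i) $ j) * (b$k * G (X i) $ k)) = c i * (b \<bullet> G (X i))^2" by simp
    qed
    then show ?thesis by (simp add: smean_def)
  qed
  finally show ?thesis by (simp add: c_def)
qed

lemma smean_mono: "(\<And>i. i < n \<Longrightarrow> f i \<le> g i) \<Longrightarrow> smean n f \<le> smean n g"
  unfolding smean_def by (intro divide_right_mono sum_mono) auto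

lemma smean_mult: "smean n (\<lambda>i. f i * c) = smean n f * c"
  unfolding smean_def by (simp add: sum_distrib_right)

theorem lemmaS16:
  fixes n :: nat and X :: "nat \<Rightarrow> 'x" and R :: "nat \<Rightarrow> real"
    and F :: "'x \<Rightarrow> real^'p" and \<gamma>bar :: "real^'p"
    and G :: "'x \<Rightarrow> real^'q"
    and \<psi> \<psi>1 :: "real \<Rightarrow> real" and C3 C4 :: real
    and \<alpha> \<alpha>t :: "real^'q"
  assumes R01: "\<forall>i<n. R i \<in> {0, 1}"
    and psi_mono: "mono \<psi>"
    and psi_deriv: "\<forall>u. (\<psi> has_real_derivative \<psi>1 u) (at u)"
    and C3_nonneg: "C3 \<ge> 0"
    and psi1_bound: "\<forall>u u'. \<psi>1 u \<le> \<psi>1 u' * exp (C3 * \<bar>u - u'\<bar>)"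
    and G_bound: "\<forall>i<n. \<forall>j. \<bar>G (X i) $ j\<bar> \<le> C4"
  shows "D_WL n X R F \<psi> (\<lambda>x. \<alpha> \<bullet> G x) (\<lambda>x. \<alpha>t \<bullet> G x) \<gamma>bar
         \<ge> ((\<alpha> - \<alpha>t) \<bullet> (Sigma_tilde n X R F \<gamma>bar \<psi>1 G \<alpha>t *v (\<alpha> - \<alpha>t)))
           * expfrac (C3 * C4 * l1norm (\<alpha> - \<alpha>t))"
proof -
  define b where "b = \<alpha> - \<alpha>t"
  define E where "E = expfrac (C3 * C4 * l1norm b)"
  have psi1_nn: "\<psi>1 u \<ge> 0" for u
    by (rule mono_on_imp_deriv_nonneg[of UNIV \<psi>]) (use psi_mono psi_deriv in auto)
  have key: "(\<psi> (v+d) - \<psi> v) * d \<ge> \<psi>1 v * d^2 * expfrac (C3 * \<bar>d\<bar>)" for v d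
  proof (cases "d \<ge> 0")
    case True
    have "\<psi>1 v * (d * expfrac (C3 * d)) * d \<le> (\<psi> (v+d) - \<psi> v) * d"
      using lemA[OF psi_deriv C3_nonneg psi1_bound True, of v] True by (rule mult_right_mono)
    then show ?thesis using True by (simp add: power2_eq_square algebra_simps)
  next
    case False
    hence d: "d \<le> 0" by simp
    have "\<psi>1 v * ((-d) * expfrac (C3 * (-d))) * (-d) \<le> (\<psi> v - \<psi> (v+d)) * (-d)"
      using lemB[OF psi_deriv C3_nonneg psi1_bound d, of v] d by (intro mult_right_mono) auto
    then show ?thesis using d by (simp add: power2_eq_square algebra_simps)
  qed
  have pt: "R i * wgt F (X i) \<gamma>bar * \<psi>1 (\<alpha>t \<bullet> G (X i)) * (b \<bullet> G (X i))^2 * E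
      \<le> R i * wgt F (X i) \<gamma>bar * (\<psi> (\<alpha> \<bullet> G (X i)) - \<psi> (\<alpha>t \<bullet> G (X i))) * (\<alpha> \<bullet> G (X i) - \<alpha>t \<bullet> G (X i))"
    if i: "i < n" for i
  proof -
    define d where "d = b \<bullet> G (X i)"
    have ad: "\<alpha> \<bullet> G (X i) = \<alpha>t \<bullet> G (X i) + d" unfolding d_def b_def by (simp add: inner_diff_left)
    have "\<bar>d\<bar> \<le> (\<Sum>j\<in>UNIV. \<bar>b $ j * G (X i) $ j\<bar>)" unfolding d_def inner_vec_def inner_real_def by (rule sum_abs)
    also have "\<dots> \<le> (\<Sum>j\<in>UNIV. \<bar>b $ j\<bar> * C4)"
      by (intro sum_mono) (use G_bound i in \<open>auto simp: abs_mult intro: mult_left_mono\<close>)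
    also have "\<dots> = C4 * l1norm b" by (simp add: l1norm_def sum_distrib_left mult.commute)
    finally have dle: "\<bar>d\<bar> \<le> C4 * l1norm b" .
    have "E \<le> expfrac (C3 * \<bar>d\<bar>)" unfolding E_def
      using dle C3_nonneg by (intro expfrac_anti) (auto simp: mult.assoc intro: mult_left_mono)
    hence "\<psi>1 (\<alpha>t \<bullet> G (X i)) * d^2 * E \<le> \<psi>1 (\<alpha>t \<bullet> G (X i)) * d^2 * expfrac (C3 * \<bar>d\<bar>)"
      using psi1_nn by (intro mult_left_mono) auto
    also have "\<dots> \<le> (\<psi> (\<alpha> \<bullet> G (X i)) - \<psi> (\<alpha>t \<bullet> G (X i))) * d"
      using key[of "\<alpha>t \<bullet> G (X i)" d] ad by simp
    finally have 1: "\<psi>1 (\<alpha>t \<bullet> G (X i)) * d^2 * E \<le> (\<psi> (\<alpha> \<bullet> G (X i)) - \<psi> (\<alpha>t \<bullet> G (X i))) * d" .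
    have rw: "R i * wgt F (X i) \<gamma>bar \<ge> 0" using R01 i by (auto simp: wgt_def)
    from mult_left_mono[OF 1 rw] show ?thesis using ad unfolding d_def by (simp add: mult.assoc)
  qed
  have "((\<alpha> - \<alpha>t) \<bullet> (Sigma_tilde n X R F \<gamma>bar \<psi>1 G \<alpha>t *v (\<alpha> - \<alpha>t))) * expfrac (C3 * C4 * l1norm (\<alpha> - \<alpha>t))
      = smean n (\<lambda>i. R i * wgt F (X i) \<gamma>bar * \<psi>1 (\<alpha>t \<bullet> G (X i)) * (b \<bullet> G (X i))^2 * E)"
    unfolding b_def[symmetric] E_def[symmetric] quadform smean_mult ..
  also have "\<dots> \<le> D_WL n X R F \<psi> (\<lambda>x. \<alpha> \<bullet> G x) (\<lambda>x. \<alpha>t \<bullet> G x) \<gamma>bar"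
    unfolding D_WL_def by (rule smean_mono) (use pt in simp)
  finally show ?thesis .
qed

end
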